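(* Let $G$ be a simple connected graph. Then the following statements are equivalent: (i) $G\in\Gamma_{\leq 1}$, i.e. $\gamma(G)\le 1$; (ii) $G$ is $P_3$-free, i.e. no induced subgraph of $G$ is isomorphic to the path $P_3$ on three vertices; (iii) $G$ is a complete graph.
   Context: For a finite graph $G$ and indeterminates $X_G=\{x_u : u\in V(G)\}$, the generalized Laplacian matrix $L(G,X_G)$ is the $V(G)\times V(G)$ matrix over $\mathbb{Z}[X_G]$ whose $(u,u)$-entry is $x_u$ and whose $(u,v)$-entry for $u\neq v$ is $-m_{uv}$, where $m_{uv}$ is the number of edges between $u$ and $v$. For $1\le i\le |V(G)|$ the $i$-th critical ideal $I_i(G,X_G)$ is the ideal of $\mathbb{Z}[X_G]$ generated by all $i\times i$ minors of $L(G,X_G)$; by convention $I_i(G,X_G)=\langle 1\rangle$ for $i<1$ and $\langle 0\rangle$ for $i>|V(G)|$. The algebraic co-rank $\gamma(G)$ is the number of critical ideals of $G$ equal to $\langle 1\rangle$. $\Gamma_{\le k}$ denotes the set of simple connected graphs $G$ with $\gamma(G)\le k$. *)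

theory Defs
  imports "HOL-Library.Poly_Mapping" "Jordan_Normal_Form.Determinant"
begin

text \<open>Multivariate integer polynomials Z[x_v : v] as finitely supported maps from
  monomials (finitely supported exponent vectors) to integer coefficients.\<close>
type_synonym 'v mpoly_int = "('v \<Rightarrow>\<^sub>0 nat) \<Rightarrow>\<^sub>0 int"

definition var :: "'v \<Rightarrow> 'v mpoly_int" where
  "var v = Poly_Mapping.single (Poly_Mapping.single v 1) 1"

definition gen_ideal :: "'r::comm_ring_1 set \<Rightarrow> 'r set" where
  "gen_ideal S = {x. \<exists>F c. finite F \<and> F \<subseteq> S \<and> x = (\<Sum>s\<in>F. c s * s)}"

definition simple_graph :: "'v set \<Rightarrow> ('v \<Rightarrow> 'v \<Rightarrow> bool) \<Rightarrow> bool" where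
  "simple_graph V E \<longleftrightarrow> finite V \<and> (\<forall>u v. E u v \<longrightarrow> u \<in> V \<and> v \<in> V \<and> u \<noteq> v \<and> E v u)"

definition connected_graph :: "'v set \<Rightarrow> ('v \<Rightarrow> 'v \<Rightarrow> bool) \<Rightarrow> bool" where
  "connected_graph V E \<longleftrightarrow> V \<noteq> {} \<and> (\<forall>u\<in>V. \<forall>v\<in>V. E\<^sup>*\<^sup>* u v)"

definition gen_laplacian :: "('v \<Rightarrow> 'v \<Rightarrow> bool) \<Rightarrow> 'v \<Rightarrow> 'v \<Rightarrow> 'v mpoly_int" where
  "gen_laplacian E u v = (if u = v then var u else - (if E u v then 1 else 0))"

text \<open>i x i minors: determinants of the submatrices with rows r(0..i-1), columns c(0..i-1),
  r and c injective into V (each minor arises up to sign, so the generated ideal is the same).\<close>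
definition minors :: "'v set \<Rightarrow> ('v \<Rightarrow> 'v \<Rightarrow> bool) \<Rightarrow> nat \<Rightarrow> 'v mpoly_int set" where
  "minors V E i = {det (mat i i (\<lambda>(a, b). gen_laplacian E (r a) (c b))) | r c.
       inj_on r {0..<i} \<and> r ` {0..<i} \<subseteq> V \<and> inj_on c {0..<i} \<and> c ` {0..<i} \<subseteq> V}"

definition critical_ideal :: "'v set \<Rightarrow> ('v \<Rightarrow> 'v \<Rightarrow> bool) \<Rightarrow> nat \<Rightarrow> 'v mpoly_int set" where
  "critical_ideal V E i =
     (if i < 1 then gen_ideal {1} else if i > card V then gen_ideal {0} else gen_ideal (minors V E i))"

definition algebraic_corank :: "'v set \<Rightarrow> ('v \<Rightarrow> 'v \<Rightarrow> bool) \<Rightarrow> nat" where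
  "algebraic_corank V E = card {i \<in> {1..card V}. critical_ideal V E i = gen_ideal {1}}"

definition P3_free :: "'v set \<Rightarrow> ('v \<Rightarrow> 'v \<Rightarrow> bool) \<Rightarrow> bool" where
  "P3_free V E \<longleftrightarrow> \<not> (\<exists>f::nat \<Rightarrow> 'v. inj_on f {0,1,2} \<and> f ` {0,1,2} \<subseteq> V \<and>
      (\<forall>i\<in>{0,1,2}. \<forall>j\<in>{0,1,2}. E (f i) (f j) \<longleftrightarrow> (i = j + 1 \<or> j = i + 1)))"

definition complete_graph :: "'v set \<Rightarrow> ('v \<Rightarrow> 'v \<Rightarrow> bool) \<Rightarrow> bool" where
  "complete_graph V E \<longleftrightarrow> (\<forall>u\<in>V. \<forall>v\<in>V. u \<noteq> v \<longrightarrow> E u v)"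

end

theory Submission
  imports Defs
begin

definition sg :: "('v \<Rightarrow>\<^sub>0 nat) \<Rightarrow> int" where
  "sg m = (-1) ^ (\<Sum>k\<in>Poly_Mapping.keys m. Poly_Mapping.lookup m k)"

lemma sg_add: "sg (m + n) = sg m * sg n"
proof -
  have "(\<Sum>k\<in>Poly_Mapping.keys (m+n). Poly_Mapping.lookup (m+n) k) =
     (\<Sum>k\<in>Poly_Mapping.keys m. Poly_Mapping.lookup m k) + (\<Sum>k\<in>Poly_Mapping.keys n. Poly_Mapping.lookup n k)"
    by (rule setsum_keys_plus_distrib[where f="\<lambda>k x. x"]) auto
  then show ?thesis unfolding sg_def by (simp add: power_add)
qed

lemma sg_zero: "sg 0 = 1" by (simp add: sg_def)

lemma sg_var: "sg (Poly_Mapping.single v 1) = -1" by (simp add: sg_def)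

definition ev :: "'v mpoly_int \<Rightarrow> int" where
  "ev p = Poly_Mapping.lookup (frag_extend (\<lambda>m. frag_cmul (sg m) (frag_of ())) p) ()"

lemma ev_of: "ev (frag_of m) = sg m" by (simp add: ev_def)
lemma ev_diff: "ev (a - b) = ev a - ev b" by (simp add: ev_def frag_extend_diff lookup_minus)
lemma ev_add: "ev (a + b) = ev a + ev b" by (simp add: ev_def frag_extend_add lookup_add)
lemma ev_0: "ev 0 = 0" by (simp add: ev_def)

lemma ev_mult_of: "ev (frag_of m * b) = sg m * ev b"
proof -
  have "Poly_Mapping.keys b \<subseteq> UNIV" by simp
  then show ?thesis
  proof (induction b rule: frag_induction)
    case zero then show ?case by (simp add: ev_0)
  next
    case (one x) then show ?case by (simp add: mult_single ev_of sg_add)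
  next
    case (diff a b) then show ?case by (simp add: right_diff_distrib ev_diff)
  qed
qed

lemma ev_mult: "ev (a * b) = ev a * ev b"
proof -
  have "Poly_Mapping.keys a \<subseteq> UNIV" by simp
  then show ?thesis
  proof (induction a rule: frag_induction)
    case zero then show ?case by (simp add: ev_0)
  next
    case (one x) then show ?case by (simp add: ev_mult_of ev_of)
  next
    case (diff a c) then show ?case by (simp add: left_diff_distrib ev_diff)
  qed
qed

lemma ev_1: "ev 1 = 1"
  using ev_of[of 0] sg_zero by (metis single_one)

interpretation ev: comm_ring_hom ev
  by unfold_locales (auto simp: ev_1 ev_add ev_mult ev_0)

lemma ev_var: "ev (var v) = -1"
  unfolding var_def using ev_of sg_var by metis


lemma gen_ideal_one: "gen_ideal {1::'r::comm_ring_1} = UNIV"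
proof -
  have "x \<in> gen_ideal {1}" for x :: 'r
    unfolding gen_ideal_def by (rule CollectI, rule exI[of _ "{1}"], rule exI[of _ "\<lambda>_. x"]) simp
  then show ?thesis by blast
qed

lemma gen_ideal_unit: assumes "m \<in> S" "m * m = (1::'r::comm_ring_1)"
  shows "gen_ideal S = gen_ideal {1}"
proof -
  have "x \<in> gen_ideal S" for x :: 'r
    unfolding gen_ideal_def
    by (rule CollectI, rule exI[of _ "{m}"], rule exI[of _ "\<lambda>_. x * m"]) (use assms in \<open>simp add: mult.assoc\<close>)
  then show ?thesis using gen_ideal_one by blast
qed

lemma ev_gen_ideal: assumes "\<forall>s\<in>S. ev s = 0" "x \<in> gen_ideal S" shows "ev x = 0"
proof -
  obtain F c where "finite F" "F \<subseteq> S" "x = (\<Sum>s\<in>F. c s * s)" using assms(2) unfolding gen_ideal_def by blast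
  then show ?thesis using assms(1) by (auto simp: ev.hom_sum ev_mult subset_iff intro!: sum.neutral)
qed

lemma complete_minor_ev:
  assumes "complete_graph V E" "2 \<le> i" "r ` {0..<i} \<subseteq> V" "c ` {0..<i} \<subseteq> V"
  shows "ev (det (mat i i (\<lambda>(a, b). gen_laplacian E (r a) (c b)))) = 0"
proof -
  let ?M = "mat i i (\<lambda>(a, b). gen_laplacian E (r a) (c b))"
  have "map_mat ev ?M = mat i i (\<lambda>_. -1)"
  proof (rule eq_matI)
    fix a b assume ab: "a < dim_row (mat i i (\<lambda>_. -1::int))" "b < dim_col (mat i i (\<lambda>_. -1::int))"
    then have "r a \<in> V" "c b \<in> V" using assms by auto
    then show "map_mat ev ?M $$ (a, b) = mat i i (\<lambda>_. -1) $$ (a, b)"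
    proof -
      have "map_mat ev ?M $$ (a, b) = ev (gen_laplacian E (r a) (c b))" using ab by simp
      also have "\<dots> = -1"
      proof (cases "r a = c b")
        case True then show ?thesis by (simp add: gen_laplacian_def ev_var)
      next
        case False
        then have "E (r a) (c b)" using assms(1) \<open>r a \<in> V\<close> \<open>c b \<in> V\<close> unfolding complete_graph_def by blast
        then show ?thesis using False by (simp add: gen_laplacian_def ev.hom_uminus ev_1)
      qed
      finally show ?thesis using ab by simp
    qed
  qed auto
  moreover have "det (mat i i (\<lambda>_. -1::int)) = 0"
      proof (rule det_identical_rows[of _ i 0 1])
    show "mat i i (\<lambda>_. -1::int) \<in> carrier_mat i i" by simp
    show "row (mat i i (\<lambda>_. -1::int)) 0 = row (mat i i (\<lambda>_. -1)) 1"
      using assms(2) by (intro eq_vecI) auto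
  qed (use assms(2) in simp_all)
  ultimately show ?thesis by (metis ev.hom_det)
qed

lemma complete_corank:
  fixes V :: "'v set" and E :: "'v \<Rightarrow> 'v \<Rightarrow> bool"
  assumes "complete_graph V E"
  shows "algebraic_corank V E \<le> 1"
proof -
  have sub: "{i \<in> {1..card V}. critical_ideal V E i = gen_ideal {1}} \<subseteq> {1}"
  proof
    fix i assume i: "i \<in> {i \<in> {1..card V}. critical_ideal V E i = gen_ideal {1}}"
    show "i \<in> {1}"
    proof (rule ccontr)
      assume "i \<notin> {1}"
      have i1: "1 \<le> i" "i \<le> card V" "critical_ideal V E i = gen_ideal {1}" using i by auto
      then have i2: "2 \<le> i" using \<open>i \<notin> {1}\<close> by auto
      have ci: "critical_ideal V E i = gen_ideal (minors V E i)" using i1 i2 unfolding critical_ideal_def by simp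
      have "\<forall>s\<in>minors V E i. ev s = 0"
      proof
        fix s assume "s \<in> minors V E i"
        then obtain r c where "s = det (mat i i (\<lambda>(a, b). gen_laplacian E (r a) (c b)))"
          "r ` {0..<i} \<subseteq> V" "c ` {0..<i} \<subseteq> V" unfolding minors_def by blast
        then show "ev s = 0" using complete_minor_ev[OF assms i2] by simp
      qed
      moreover have "1 \<in> gen_ideal (minors V E i)" using i1(3) ci gen_ideal_one by (metis UNIV_I)
      ultimately have "ev (1::'v mpoly_int) = 0" by (rule ev_gen_ideal)
      then show False by (simp add: ev_1)
    qed
  qed
  have "card {i \<in> {1..card V}. critical_ideal V E i = gen_ideal {1}} \<le> card {1::nat}"
    using card_mono[OF _ sub] by simp
  then show ?thesis unfolding algebraic_corank_def by simp
qed


lemma reach_p3: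
  assumes sg: "simple_graph V E" and "E\<^sup>*\<^sup>* u x"
  shows "x = u \<or> E u x \<or> (\<exists>a b c. E a b \<and> E b c \<and> \<not> E a c \<and> a \<noteq> c)"
  using assms(2)
proof (induction rule: rtranclp_induct)
  case base then show ?case by simp
next
  case (step y z)
  from step.IH show ?case
  proof (elim disjE)
    assume "y = u" then show ?thesis using step.hyps(2) by simp
  next
    assume "E u y"
    then show ?thesis using step.hyps(2) by blast
  qed blast
qed

lemma noncomplete_p3:
  fixes V :: "'v set" and E :: "'v \<Rightarrow> 'v \<Rightarrow> bool"
  assumes sg: "simple_graph V E" and cg: "connected_graph V E" and nc: "\<not> complete_graph V E"
  shows "\<exists>a b c. E a b \<and> E b c \<and> \<not> E a c \<and> a \<noteq> c"
proof -
  obtain u v where uv: "u \<in> V" "v \<in> V" "u \<noteq> v" "\<not> E u v" using nc unfolding complete_graph_def by blast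
  then have "E\<^sup>*\<^sup>* u v" using cg unfolding connected_graph_def by blast
  from reach_p3[OF sg this] show ?thesis using uv by blast
qed

lemma p3_iff_complete:
  fixes V :: "'v set" and E :: "'v \<Rightarrow> 'v \<Rightarrow> bool"
  assumes sg: "simple_graph V E" and cg: "connected_graph V E"
  shows "P3_free V E \<longleftrightarrow> complete_graph V E"
proof
  assume p: "P3_free V E"
  show "complete_graph V E"
  proof (rule ccontr)
    assume "\<not> complete_graph V E"
    then obtain a b c where abc: "E a b" "E b c" "\<not> E a c" "a \<noteq> c" using noncomplete_p3[OF sg cg] by blast
    have sgp: "\<And>u v. E u v \<Longrightarrow> u \<in> V \<and> v \<in> V \<and> u \<noteq> v \<and> E v u" using sg unfolding simple_graph_def by blast
    define f where "f = (\<lambda>n::nat. if n = 0 then a else if n = 1 then b else c)"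
    have "inj_on f {0,1,2}" using abc sgp[OF abc(1)] sgp[OF abc(2)] unfolding f_def inj_on_def by auto
    moreover have "f ` {0,1,2} \<subseteq> V" using sgp[OF abc(1)] sgp[OF abc(2)] unfolding f_def by auto
    moreover have "\<forall>i\<in>{0,1,2}. \<forall>j\<in>{0,1,2}. E (f i) (f j) \<longleftrightarrow> (i = j + 1 \<or> j = i + 1)"
      using abc sgp[OF abc(1)] sgp[OF abc(2)] sgp[of a a] sgp[of b b] sgp[of c c] sgp[of c a]
      unfolding f_def by auto
    ultimately show False using p unfolding P3_free_def by blast
  qed
next
  assume c: "complete_graph V E"
  show "P3_free V E"
    unfolding P3_free_def
  proof
    assume "\<exists>f::nat \<Rightarrow> 'v. inj_on f {0,1,2} \<and> f ` {0,1,2} \<subseteq> V \<and>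
      (\<forall>i\<in>{0,1,2}. \<forall>j\<in>{0,1,2}. E (f i) (f j) \<longleftrightarrow> (i = j + 1 \<or> j = i + 1))"
    then obtain f :: "nat \<Rightarrow> 'v" where f: "inj_on f {0,1,2}" "f ` {0,1,2} \<subseteq> V"
      "\<forall>i\<in>{0,1,2}. \<forall>j\<in>{0,1,2}. E (f i) (f j) \<longleftrightarrow> (i = j + 1 \<or> j = i + 1)" by blast
    have "f 0 \<noteq> f 2" using f(1) unfolding inj_on_def by auto
    moreover have "f 0 \<in> V" "f 2 \<in> V" using f(2) by auto
    moreover have "\<not> E (f 0) (f 2)" using f(3) by auto
    ultimately show False using c unfolding complete_graph_def by blast
  qed
qed

lemma noncomplete_corank:
  fixes V :: "'v set" and E :: "'v \<Rightarrow> 'v \<Rightarrow> bool"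
  assumes sg: "simple_graph V E" and cg: "connected_graph V E" and nc: "\<not> complete_graph V E"
  shows "2 \<le> algebraic_corank V E"
proof -
  obtain u w v where abc: "E u w" "E w v" "\<not> E u v" "u \<noteq> v" using noncomplete_p3[OF sg cg nc] by blast
  have sgp: "\<And>a b. E a b \<Longrightarrow> a \<in> V \<and> b \<in> V \<and> a \<noteq> b \<and> E b a" using sg unfolding simple_graph_def by blast
  have V: "u \<in> V" "w \<in> V" "v \<in> V" "u \<noteq> w" "w \<noteq> v" using sgp[OF abc(1)] sgp[OF abc(2)] by auto
  have fin: "finite V" using sg unfolding simple_graph_def by blast
  have "card {u, v} \<le> card V" using V fin by (intro card_mono) auto
  then have cV: "2 \<le> card V" using abc(4) by simp
  let ?M1 = "mat 1 1 (\<lambda>(a, b). gen_laplacian E ((\<lambda>_. u) a) ((\<lambda>_. w) b))"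
  have "det ?M1 = prod_list (diag_mat ?M1)" by (rule det_lower_triangular[where n=1]) auto
  also have "\<dots> = -1" using V by (simp add: diag_mat_def gen_laplacian_def abc(1))
  finally have d1: "det ?M1 = -1" .
  have "det ?M1 \<in> minors V E 1" unfolding minors_def
    by (rule CollectI, rule exI[of _ "\<lambda>_. u"], rule exI[of _ "\<lambda>_. w"]) (use V in auto)
  then have "-1 \<in> minors V E 1" using d1 by simp
  then have I1: "critical_ideal V E 1 = gen_ideal {1}"
    using cV gen_ideal_unit[of "-1" "minors V E 1"] unfolding critical_ideal_def by simp
  define r where "r = (\<lambda>a::nat. if a = 0 then u else w)"
  define c where "c = (\<lambda>a::nat. if a = 0 then w else v)"
  let ?M2 = "mat 2 2 (\<lambda>(a, b). gen_laplacian E (r a) (c b))"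
  have "det ?M2 = prod_list (diag_mat ?M2)"
  proof (rule det_lower_triangular[where n=2])
    fix i j :: nat assume "i < j" "j < 2"
    then have "i = 0" "j = 1" by auto
    then show "?M2 $$ (i, j) = 0" using abc V by (simp add: r_def c_def gen_laplacian_def)
  qed simp
  also have "\<dots> = 1" using V abc by (simp add: diag_mat_def gen_laplacian_def r_def c_def upt_conv_Cons)
  finally have d2: "det ?M2 = 1" .
  have "inj_on r {0..<2}" "inj_on c {0..<2}" using V abc unfolding r_def c_def inj_on_def by auto
  moreover have "r ` {0..<2} \<subseteq> V" "c ` {0..<2} \<subseteq> V" using V unfolding r_def c_def by auto
  ultimately have "det ?M2 \<in> minors V E 2" unfolding minors_def
    by (intro CollectI exI[of _ r] exI[of _ c]) simp
  then have "1 \<in> minors V E 2" using d2 by simp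
  then have I2: "critical_ideal V E 2 = gen_ideal {1}"
    using cV gen_ideal_unit[of "1" "minors V E 2"] unfolding critical_ideal_def by simp
  have "{1, 2} \<subseteq> {i \<in> {1..card V}. critical_ideal V E i = gen_ideal {1}}" using I1 I2 cV by auto
  then have "card {1::nat, 2} \<le> algebraic_corank V E"
    unfolding algebraic_corank_def by (intro card_mono) auto
  then show ?thesis by simp
qed

theorem theorem3p3:
  fixes V :: "'v set" and E :: "'v \<Rightarrow> 'v \<Rightarrow> bool"
  assumes "simple_graph V E" and "connected_graph V E"
  shows "(algebraic_corank V E \<le> 1 \<longleftrightarrow> P3_free V E) \<and> (P3_free V E \<longleftrightarrow> complete_graph V E)"
  using p3_iff_complete[OF assms] complete_corank[of V E] noncomplete_corank[OF assms]
  by (cases "complete_graph V E") auto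

end
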